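(* The Dd-MDP corresponding to any online job scheduling (OJS) instance admits a deterministic chasing oracle whose chasing regret is at most $2\cdot CW$ (for any target pricing policy, any initial round and any initial bandwidth vector).
   Context: OJS problem: there are $N$ slots; slot $i\in[N]$ has bandwidth $c(i)$. $T$ jobs arrive in order $t=1,\dots,T$; job $t$ has arrival slot $a_t$, departure slot $d_t\ge a_t$, length $1\le l_t\le d_t-a_t+1$ and value $v_t\in[0,1)$, chosen by an adversary; jobs are reported at the beginning of their arrival slot in the order of their indices (so $a_1\le a_2\le\cdots\le a_T$). $C\ge\max_ic(i)$ and $W\ge\max_t(d_t-a_t+1)$. Let $A_t=[a_t,a_t+W-1]$ and $\mathcal I_t=\{[i,i+l_t-1]:a_t\le i\le d_t-l_t+1\}$. For job $t$ the mechanism posts $\bm p\in(0,1]^{A_t}$ (before seeing $d_t,l_t,v_t$); the job receives one bandwidth unit of each slot in $\hat A^{\bm p}_t=\emptyset$ if $v_t<\min_{I\in\mathcal I_t}\sum_{i\in I}\bm p(i)$, and otherwise $\hat A^{\bm p}_t=\arg\min_{I\in\mathcal I_t}\sum_{i\in I}\bm p(i)$ (lexicographic ties), paying $\hat q^{\bm p}_t=\sum_{i\in\hat A^{\bm p}_t}\bm p(i)$. The bandwidth vector $\bm\lambda_t\in\{0,\dots,C\}^{A_t}$ records remaining bandwidth: $\bm\lambda_t(i)=c(i)$ if slot $i$ was not allocated to jobs $1,\dots,t-1$, and $\bm\lambda_{t+1}(i)=\bm\lambda_t(i)-1$ if slot $i$ is allocated to job $t$ and $i\in A_{t+1}$. $\bm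 p$ is feasible for $\bm\lambda$ if $\bm p(i)=1$ whenever $\bm\lambda(i)=0$. A pricing policy maps bandwidth vectors to feasible price vectors. Corresponding Dd-MDP: states are bandwidth vectors; actions at a state are feasible price vectors; reward $f_t(s,x)=\hat q^x_t$; transition $g_t(s,x)=s'$ where $s'(i)=s(i)-\mathbb{1}[i\in\hat A^x_t]$ for $i\in A_t\cap A_{t+1}$ and $s'(i)=c(i)$ for $i\in A_{t+1}\setminus A_t$. A policy $\gamma$ is simulated from the true start: $s^\gamma_1=s_1$, $x^\gamma_t=\gamma(s^\gamma_t)$, $s^\gamma_{t+1}=g_t(s^\gamma_t,x^\gamma_t)$. Chasing oracle: given target policy $\gamma$, invoked at round $t_{\mathrm{init}}$ with an arbitrary initial state $s_{\mathrm{init}}$, it outputs in each round $t\ge t_{\mathrm{init}}$ an action $\hat x(t)$ feasible for $\hat s(t)$, where $\hat s(t_{\mathrm{init}})=s_{\mathrm{init}}$, $\hat s(t)=g_{t-1}(\hat s(t-1),\hat x(t-1))$, observing $g_t,f_t$ after each round; its chasing regret up to any halting round $t_{\mathrm{final}}\ge t_{\mathrm{init}}$ is $\sum_{t=t_{\mathrm{init}}}^{t_{\mathrm{final}}}f_t(s^\gamma_t,x^\gamma_t)-\sum_{t=t_{\mathrm{init}}}^{t_{\mathrm{final}}}\mathbb{E}[f_t(\hat s(t),\hat x(t))]$. *)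

theory Defs
  imports Main "HOL.Real"
begin

text \<open>Slots are natural numbers; a job is a tuple (a, d, l, v) = (arrival slot,
  departure slot, length, value).  Rounds (jobs) are indexed 1..T.
  A bandwidth vector on the window A = {a..<a+W} is represented by a function
  nat => nat of which only the values on the window matter; a price vector
  likewise by a function nat => real.\<close>

type_synonym job = "nat \<times> nat \<times> nat \<times> real"

definition window :: "nat \<Rightarrow> nat \<Rightarrow> nat set" where
  "window W a = {a..<a+W}"

definition job_of :: "(nat \<Rightarrow> nat) \<Rightarrow> (nat \<Rightarrow> nat) \<Rightarrow> (nat \<Rightarrow> nat) \<Rightarrow> (nat \<Rightarrow> real) \<Rightarrow> nat \<Rightarrow> job" where
  "job_of a d l v t = (a t, d t, l t, v t)"

definition OJS_instance :: "nat \<Rightarrow> nat \<Rightarrow> nat \<Rightarrow> (nat \<Rightarrow> nat) \<Rightarrow> (nat \<Rightarrow> nat) \<Rightarrow> (nat \<Rightarrow> nat) \<Rightarrow> (nat \<Rightarrow> real) \<Rightarrow> bool" where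
  "OJS_instance N W T a d l v \<longleftrightarrow>
     (\<forall>t\<in>{1..T}. 1 \<le> a t \<and> a t \<le> d t \<and> d t \<le> N \<and>
                 1 \<le> l t \<and> l t \<le> d t - a t + 1 \<and>
                 0 \<le> v t \<and> v t < 1 \<and> d t - a t + 1 \<le> W) \<and>
     (\<forall>t\<in>{1..<T}. a t \<le> a (Suc t))"

definition bw_vec :: "nat \<Rightarrow> nat \<Rightarrow> nat \<Rightarrow> (nat \<Rightarrow> nat) \<Rightarrow> bool" where
  "bw_vec W C a bw \<longleftrightarrow> (\<forall>i\<in>window W a. bw i \<le> C)"

definition feasible_price :: "nat \<Rightarrow> nat \<Rightarrow> (nat \<Rightarrow> nat) \<Rightarrow> (nat \<Rightarrow> real) \<Rightarrow> bool" where
  "feasible_price W a bw p \<longleftrightarrow>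
     (\<forall>i\<in>window W a. 0 < p i \<and> p i \<le> 1 \<and> (bw i = 0 \<longrightarrow> p i = 1))"

text \<open>A pricing policy: given the window start (i.e. the index set A_t of the
  bandwidth vector) and the bandwidth vector, returns a feasible price vector.\<close>
definition pricing_policy :: "nat \<Rightarrow> nat \<Rightarrow> (nat \<Rightarrow> (nat \<Rightarrow> nat) \<Rightarrow> (nat \<Rightarrow> real)) \<Rightarrow> bool" where
  "pricing_policy W C \<gamma> \<longleftrightarrow>
     (\<forall>a bw. bw_vec W C a bw \<longrightarrow> feasible_price W a bw (\<gamma> a bw))"

definition interval_cost :: "(nat \<Rightarrow> real) \<Rightarrow> nat \<Rightarrow> nat \<Rightarrow> real" where
  "interval_cost p i l = (\<Sum>j\<in>{i..<i+l}. p j)"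

definition starts :: "job \<Rightarrow> nat set" where
  "starts j = (case j of (a, d, l, v) \<Rightarrow> {a..d+1-l})"

definition min_cost :: "(nat \<Rightarrow> real) \<Rightarrow> job \<Rightarrow> real" where
  "min_cost p j = (case j of (a, d, l, v) \<Rightarrow> Min ((\<lambda>i. interval_cost p i l) ` starts j))"

text \<open>Lexicographically smallest minimising interval = smallest minimising start.\<close>
definition alloc_start :: "(nat \<Rightarrow> real) \<Rightarrow> job \<Rightarrow> nat" where
  "alloc_start p j = (case j of (a, d, l, v) \<Rightarrow>
      (LEAST i. i \<in> starts j \<and> interval_cost p i l = min_cost p j))"

definition allocated :: "(nat \<Rightarrow> real) \<Rightarrow> job \<Rightarrow> bool" where
  "allocated p j = (case j of (a, d, l, v) \<Rightarrow> \<not> (v < min_cost p j))"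

definition alloc_set :: "(nat \<Rightarrow> real) \<Rightarrow> job \<Rightarrow> nat set" where
  "alloc_set p j = (case j of (a, d, l, v) \<Rightarrow>
      (if allocated p j then {alloc_start p j ..< alloc_start p j + l} else {}))"

definition payment :: "(nat \<Rightarrow> real) \<Rightarrow> job \<Rightarrow> real" where
  "payment p j = (if allocated p j then min_cost p j else 0)"

text \<open>Transition g_t(s, x), where j is job t and j' is job t+1.\<close>
definition trans :: "nat \<Rightarrow> (nat \<Rightarrow> nat) \<Rightarrow> job \<Rightarrow> job \<Rightarrow> (nat \<Rightarrow> nat) \<Rightarrow> (nat \<Rightarrow> real) \<Rightarrow> (nat \<Rightarrow> nat)" where
  "trans W c j j' s x = (\<lambda>i.
      if i \<in> window W (fst j) \<inter> window W (fst j') then s i - (if i \<in> alloc_set x j then 1 else 0)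
      else if i \<in> window W (fst j') then c i else 0)"

text \<open>Trajectory of policy \<gamma> from the true start s_1 (all bandwidth free):
  policy_state ... n is the state s^gamma_(n+1).\<close>
primrec policy_state :: "nat \<Rightarrow> (nat \<Rightarrow> nat) \<Rightarrow> (nat \<Rightarrow> (nat \<Rightarrow> nat) \<Rightarrow> (nat \<Rightarrow> real)) \<Rightarrow> (nat \<Rightarrow> job) \<Rightarrow> nat \<Rightarrow> (nat \<Rightarrow> nat)" where
  "policy_state W c \<gamma> job 0 = (\<lambda>i. if i \<in> window W (fst (job 1)) then c i else 0)"
| "policy_state W c \<gamma> job (Suc n) =
     trans W c (job (Suc n)) (job (Suc (Suc n))) (policy_state W c \<gamma> job n)
       (\<gamma> (fst (job (Suc n))) (policy_state W c \<gamma> job n))"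

text \<open>A deterministic chasing chaser: given target policy, initial round, initial
  state, the history of jobs 1..t-1 and the arrival slot a_t of the current round
  (which determines the index set A_t of the current state), it outputs a price
  vector for round t.\<close>
type_synonym chaser =
  "(nat \<Rightarrow> (nat \<Rightarrow> nat) \<Rightarrow> (nat \<Rightarrow> real)) \<Rightarrow> nat \<Rightarrow> (nat \<Rightarrow> nat) \<Rightarrow> job list \<Rightarrow> nat \<Rightarrow> (nat \<Rightarrow> real)"

definition chaser_action :: "chaser \<Rightarrow> (nat \<Rightarrow> (nat \<Rightarrow> nat) \<Rightarrow> (nat \<Rightarrow> real)) \<Rightarrow> nat \<Rightarrow> (nat \<Rightarrow> nat) \<Rightarrow> (nat \<Rightarrow> job) \<Rightarrow> nat \<Rightarrow> (nat \<Rightarrow> real)" where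
  "chaser_action Orc \<gamma> t0 s0 job t = Orc \<gamma> t0 s0 (map job [1..<t]) (fst (job t))"

text \<open>chaser_state ... k is the chaser's state hat-s(t0 + k).\<close>
primrec chaser_state :: "nat \<Rightarrow> (nat \<Rightarrow> nat) \<Rightarrow> chaser \<Rightarrow> (nat \<Rightarrow> (nat \<Rightarrow> nat) \<Rightarrow> (nat \<Rightarrow> real)) \<Rightarrow> nat \<Rightarrow> (nat \<Rightarrow> nat) \<Rightarrow> (nat \<Rightarrow> job) \<Rightarrow> nat \<Rightarrow> (nat \<Rightarrow> nat)" where
  "chaser_state W c Orc \<gamma> t0 s0 job 0 = s0"
| "chaser_state W c Orc \<gamma> t0 s0 job (Suc k) =
     trans W c (job (t0 + k)) (job (Suc (t0 + k))) (chaser_state W c Orc \<gamma> t0 s0 job k)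
       (chaser_action Orc \<gamma> t0 s0 job (t0 + k))"

end

theory Submission
  imports Defs
begin


definition jobs_of_list :: "job list \<Rightarrow> nat \<Rightarrow> (nat \<Rightarrow> job)" where
  "jobs_of_list hs a0 = (\<lambda>k. if 1 \<le> k \<and> k \<le> length hs then hs ! (k - 1) else (a0, 0, 0, 0))"

definition act :: "nat \<Rightarrow> (nat \<Rightarrow> nat) \<Rightarrow> (nat \<Rightarrow> (nat \<Rightarrow> nat) \<Rightarrow> (nat \<Rightarrow> real)) \<Rightarrow> (nat \<Rightarrow> job) \<Rightarrow> nat \<Rightarrow> (nat \<Rightarrow> nat) \<Rightarrow> (nat \<Rightarrow> real)" where
  "act W c \<gamma> job t sh = (if \<forall>i\<in>window W (fst (job t)). policy_state W c \<gamma> job (t - 1) i \<le> sh i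
     then \<gamma> (fst (job t)) (policy_state W c \<gamma> job (t - 1)) else (\<lambda>_. 1))"

primrec cst :: "nat \<Rightarrow> (nat \<Rightarrow> nat) \<Rightarrow> (nat \<Rightarrow> (nat \<Rightarrow> nat) \<Rightarrow> (nat \<Rightarrow> real)) \<Rightarrow> nat \<Rightarrow> (nat \<Rightarrow> nat) \<Rightarrow> (nat \<Rightarrow> job) \<Rightarrow> nat \<Rightarrow> (nat \<Rightarrow> nat)" where
  "cst W c \<gamma> t0 s0 job 0 = s0"
| "cst W c \<gamma> t0 s0 job (Suc k) = trans W c (job (t0 + k)) (job (Suc (t0 + k))) (cst W c \<gamma> t0 s0 job k)
      (act W c \<gamma> job (t0 + k) (cst W c \<gamma> t0 s0 job k))"

definition orc :: "nat \<Rightarrow> (nat \<Rightarrow> nat) \<Rightarrow> chaser" where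
  "orc W c \<gamma> t0 s0 hs a0 = act W c \<gamma> (jobs_of_list hs a0) (Suc (length hs))
      (cst W c \<gamma> t0 s0 (jobs_of_list hs a0) (Suc (length hs) - t0))"

definition agree :: "(nat \<Rightarrow> job) \<Rightarrow> (nat \<Rightarrow> job) \<Rightarrow> nat \<Rightarrow> bool" where
  "agree job job' n = ((\<forall>k. 1 \<le> k \<and> k < n \<longrightarrow> job k = job' k) \<and> fst (job n) = fst (job' n))"

lemma trans_fst: "fst j' = fst j'' \<Longrightarrow> trans W c j j' = trans W c j j''"
  unfolding trans_def by (intro ext) simp

lemma agree_down: "agree job job' (Suc n) \<Longrightarrow> 1 \<le> n \<Longrightarrow> agree job job' n"
  unfolding agree_def by auto

lemma ps_agree: "agree job job' (Suc n) \<Longrightarrow> policy_state W c \<gamma> job n = policy_state W c \<gamma> job' n"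
proof (induction n)
  case 0
  then show ?case by (simp add: agree_def)
next
  case (Suc n)
  have e: "job (Suc n) = job' (Suc n)" using Suc.prems unfolding agree_def by auto
  have f: "fst (job (Suc (Suc n))) = fst (job' (Suc (Suc n)))" using Suc.prems unfolding agree_def by auto
  have "policy_state W c \<gamma> job n = policy_state W c \<gamma> job' n"
    using Suc.IH agree_down[OF Suc.prems] by simp
  then show ?case using e f trans_fst[OF f] by simp
qed

lemma act_agree: "1 \<le> t \<Longrightarrow> agree job job' t \<Longrightarrow> act W c \<gamma> job t = act W c \<gamma> job' t"
proof -
  assume t: "1 \<le> t" and ag: "agree job job' t"
  have "agree job job' (Suc (t - 1))" using t ag by simp
  then have "policy_state W c \<gamma> job (t - 1) = policy_state W c \<gamma> job' (t - 1)" by (rule ps_agree)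
  moreover have "fst (job t) = fst (job' t)" using ag unfolding agree_def by auto
  ultimately show ?thesis unfolding act_def by (intro ext) simp
qed

lemma cst_agree: "1 \<le> t0 \<Longrightarrow> agree job job' (t0 + k) \<Longrightarrow> cst W c \<gamma> t0 s0 job k = cst W c \<gamma> t0 s0 job' k"
proof (induction k)
  case 0
  then show ?case by simp
next
  case (Suc k)
  have ag: "agree job job' (t0 + k)" using agree_down[of job job' "t0 + k"] Suc.prems by simp
  have e: "job (t0 + k) = job' (t0 + k)" using Suc.prems unfolding agree_def by auto
  have f: "fst (job (Suc (t0 + k))) = fst (job' (Suc (t0 + k)))" using Suc.prems unfolding agree_def by auto
  have a: "act W c \<gamma> job (t0 + k) = act W c \<gamma> job' (t0 + k)" using act_agree[OF _ ag] Suc.prems by simp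
  show ?case using Suc.IH[OF Suc.prems(1) ag] e a trans_fst[OF f] by simp
qed

lemma agree_list: "1 \<le> t \<Longrightarrow> agree (jobs_of_list (map job [1..<t]) (fst (job t))) job t"
  unfolding agree_def jobs_of_list_def by auto

lemma agree_sym: "agree job job' n \<Longrightarrow> agree job' job n"
  unfolding agree_def by auto

lemma action_eq:
  assumes "1 \<le> t0" "t0 \<le> t"
  shows "chaser_action (orc W c) \<gamma> t0 s0 job t = act W c \<gamma> job t (cst W c \<gamma> t0 s0 job (t - t0))"
proof -
  let ?J = "jobs_of_list (map job [1..<t]) (fst (job t))"
  have ag: "agree ?J job t" using agree_list assms by simp
  have l: "Suc (length (map job [1..<t])) = t" using assms by simp
  have "chaser_action (orc W c) \<gamma> t0 s0 job t = act W c \<gamma> ?J t (cst W c \<gamma> t0 s0 ?J (t - t0))"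
    unfolding chaser_action_def orc_def l by simp
  also have "\<dots> = act W c \<gamma> job t (cst W c \<gamma> t0 s0 job (t - t0))"
    using act_agree[OF _ ag] cst_agree[of t0 ?J job "t - t0"] ag assms by simp
  finally show ?thesis .
qed

lemma chaser_eq:
  assumes "1 \<le> t0"
  shows "chaser_state W c (orc W c) \<gamma> t0 s0 job k = cst W c \<gamma> t0 s0 job k"
proof (induction k)
  case 0 then show ?case by simp
next
  case (Suc k)
  then show ?case using action_eq[OF assms, of "t0 + k"] by simp
qed

lemma ps_le_c: "policy_state W c \<gamma> job n i \<le> c i"
  proof (induction n arbitrary: i)
  case (Suc n)
  show ?case using Suc.IH[of i] by (auto simp: trans_def)
qed simp

lemma ps_out: "i \<notin> window W (fst (job (Suc n))) \<Longrightarrow> policy_state W c \<gamma> job n i = 0"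
  by (cases n) (auto simp: trans_def)



lemma job_facts:
  fixes a d l W :: nat and v :: real and p :: "nat \<Rightarrow> real"
  assumes l1: "1 \<le> l" and ld: "l \<le> d - a + 1" and ad: "a \<le> d" and dW: "d - a + 1 \<le> W"
    and v1: "v < 1"
    and pos: "\<forall>i\<in>window W a. 0 < p i \<and> p i \<le> 1"
  shows "alloc_set p (a,d,l,v) \<subseteq> window W a"
    and "allocated p (a,d,l,v) \<Longrightarrow> alloc_start p (a,d,l,v) \<in> alloc_set p (a,d,l,v)"
    and "allocated p (a,d,l,v) \<Longrightarrow> i \<in> alloc_set p (a,d,l,v) \<Longrightarrow> p i < 1"
    and "payment p (a,d,l,v) \<le> (if allocated p (a,d,l,v) then 1 else 0)"
proof -
  let ?St = "{a..d+1-l}"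
  let ?f = "\<lambda>k. interval_cost p k l"
  have st: "starts (a,d,l,v) = ?St" by (simp add: starts_def)
  have mc: "min_cost p (a,d,l,v) = Min (?f ` ?St)" by (simp add: min_cost_def starts_def)
  have ne: "?St \<noteq> {}" using l1 ld ad by auto
  have "Min (?f ` ?St) \<in> ?f ` ?St" using ne by (intro Min_in) auto
  then obtain k where k: "k \<in> ?St" "?f k = min_cost p (a,d,l,v)" using mc by auto
  define k0 where "k0 = alloc_start p (a,d,l,v)"
  have k0: "k0 \<in> ?St \<and> ?f k0 = min_cost p (a,d,l,v)"
    unfolding k0_def alloc_start_def st by simp (rule LeastI_ex, use k in auto)
  have sub: "{k0..<k0+l} \<subseteq> window W a"
    using k0 l1 ld ad dW unfolding window_def by auto
  have as: "alloc_set p (a,d,l,v) = (if allocated p (a,d,l,v) then {k0..<k0+l} else {})"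
    unfolding alloc_set_def k0_def by simp
  show "alloc_set p (a,d,l,v) \<subseteq> window W a" using as sub by auto
  show "allocated p (a,d,l,v) \<Longrightarrow> alloc_start p (a,d,l,v) \<in> alloc_set p (a,d,l,v)"
    using as l1 k0_def by auto
  have alle: "allocated p (a,d,l,v) \<Longrightarrow> min_cost p (a,d,l,v) \<le> v"
    unfolding allocated_def by simp
  show "p i < 1" if al: "allocated p (a,d,l,v)" and ii: "i \<in> alloc_set p (a,d,l,v)"
  proof -
    have iin: "i \<in> {k0..<k0+l}" using ii as al by auto
    have "p i \<le> (\<Sum>j\<in>{k0..<k0+l}. p j)"
      by (rule member_le_sum) (use iin sub pos in \<open>force+\<close>)
    also have "\<dots> = min_cost p (a,d,l,v)" using k0 by (simp add: interval_cost_def)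
    also have "\<dots> \<le> v" using alle al .
    finally show ?thesis using v1 by simp
  qed
  show "payment p (a,d,l,v) \<le> (if allocated p (a,d,l,v) then 1 else 0)"
    using alle v1 unfolding payment_def by auto
qed

lemma ones_not_alloc:
  fixes a d l :: nat and v :: real
  assumes l1: "1 \<le> l" and ld: "l \<le> d - a + 1" and ad: "a \<le> d" and v1: "v < 1"
  shows "\<not> allocated (\<lambda>_. 1) (a,d,l,v)"
proof -
  have ne: "{a..d+1-l} \<noteq> {}" using l1 ld ad by auto
  have "(\<lambda>k. interval_cost (\<lambda>_. 1) k l) ` {a..d+1-l} = {real l}"
    using ne by (auto simp: interval_cost_def)
  then have "min_cost (\<lambda>_. 1) (a,d,l,v) = real l" by (simp add: min_cost_def starts_def)
  then show ?thesis using l1 v1 by (simp add: allocated_def)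
qed



lemma in_alloc_allocated: "i \<in> alloc_set p j \<Longrightarrow> allocated p j"
  by (cases j) (auto simp: alloc_set_def split: if_splits)

theorem lemma1:
  fixes N C W :: nat and c :: "nat \<Rightarrow> nat"
  assumes "\<forall>i. c i \<le> C"
  shows "\<exists>Orc :: chaser.
    \<forall>T a d l v \<gamma> t0 s0 t1.
      OJS_instance N W T a d l v \<and> pricing_policy W C \<gamma> \<and>
      1 \<le> t0 \<and> t0 \<le> t1 \<and> t1 \<le> T \<and> bw_vec W C (a t0) s0 \<longrightarrow>
      (\<forall>t\<in>{t0..t1}.
         feasible_price W (a t) (chaser_state W c Orc \<gamma> t0 s0 (job_of a d l v) (t - t0))
           (chaser_action Orc \<gamma> t0 s0 (job_of a d l v) t)) \<and>
      (\<Sum>t\<in>{t0..t1}. payment (\<gamma> (a t) (policy_state W c \<gamma> (job_of a d l v) (t - 1))) (job_of a d l v t))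
      - (\<Sum>t\<in>{t0..t1}. payment (chaser_action Orc \<gamma> t0 s0 (job_of a d l v) t) (job_of a d l v t))
      \<le> 2 * real C * real W"
proof (rule exI[of _ "orc W c"], intro allI impI, elim conjE)
  fix T a d l v \<gamma> t0 s0 t1
  assume ojs: "OJS_instance N W T a d l v" and pp: "pricing_policy W C \<gamma>"
    and t01: "1 \<le> t0" and t0t1: "t0 \<le> t1" and t1T: "t1 \<le> T" and bw0: "bw_vec W C (a t0) s0"
  have cC: "\<And>i. c i \<le> C" using assms by auto
  define J where "J = job_of a d l v"
  have Jt: "\<And>t. J t = (a t, d t, l t, v t)" unfolding J_def job_of_def by simp
  have fJ: "\<And>t. fst (J t) = a t" using Jt by simp
  have valid: "\<And>t. t \<in> {1..T} \<Longrightarrow> 1 \<le> a t \<and> a t \<le> d t \<and> d t \<le> N \<and>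
                 1 \<le> l t \<and> l t \<le> d t - a t + 1 \<and> 0 \<le> v t \<and> v t < 1 \<and> d t - a t + 1 \<le> W"
    using ojs unfolding OJS_instance_def by blast
  have amono1: "\<And>t. 1 \<le> t \<Longrightarrow> t < T \<Longrightarrow> a t \<le> a (Suc t)"
    using ojs unfolding OJS_instance_def by auto
  have amono: "a t0 \<le> a (t0 + k)" if "t0 + k \<le> T" for k
    using that
  proof (induction k)
    case (Suc k)
    then show ?case using amono1[of "t0 + k"] t01 by simp
  qed simp
  define S where "S t = policy_state W c \<gamma> J (t - 1)" for t
  define H where "H t = cst W c \<gamma> t0 s0 J (t - t0)" for t
  define X where "X t = \<gamma> (a t) (S t)" for t
  define fol where "fol t = (\<forall>i\<in>window W (a t). S t i \<le> H t i)" for t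
  define Y where "Y t = act W c \<gamma> J t (H t)" for t
  define al where "al t = alloc_set (X t) (J t)" for t
  define L :: "nat \<Rightarrow> nat" where "L t = (if \<not> fol t \<and> allocated (X t) (J t) then 1 else 0)" for t
  define R where "R = {a t0 ..< a t0 + 2 * W}"
  define q where "q t i = (if i < a t + W then S t i else c i)" for t i
  have Yeq: "Y t = (if fol t then X t else (\<lambda>_. 1))" for t
    unfolding Y_def act_def fol_def X_def S_def fJ by simp
  have SleC: "S t i \<le> c i" for t i unfolding S_def by (rule ps_le_c)
  have Xfeas: "feasible_price W (a t) (S t) (X t)" for t
  proof -
    have "bw_vec W C (a t) (S t)" unfolding bw_vec_def using SleC cC le_trans by blast
    then show ?thesis using pp unfolding pricing_policy_def X_def by blast
  qed
  have Xpos: "\<forall>i\<in>window W (a t). 0 < X t i \<and> X t i \<le> 1" for t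
    using Xfeas[of t] unfolding feasible_price_def by blast
  have S_step: "S (Suc t) = trans W c (J t) (J (Suc t)) (S t) (X t)" if h1: "1 \<le> t" for t
  proof -
    obtain n where n: "t = Suc n" using Suc_le_D[of 0 t] h1 by auto
    show ?thesis unfolding S_def X_def n by (simp add: fJ)
  qed
  have H_step: "H (Suc t) = trans W c (J t) (J (Suc t)) (H t) (Y t)" if "t0 \<le> t" for t
  proof -
    have e: "Suc t - t0 = Suc (t - t0)" "t0 + (t - t0) = t" using that by auto
    show ?thesis unfolding H_def Y_def e by (simp add: e)
  qed
  have jf: "alloc_set (X t) (J t) \<subseteq> window W (a t)"
    "allocated (X t) (J t) \<Longrightarrow> alloc_start (X t) (J t) \<in> alloc_set (X t) (J t)"
    "allocated (X t) (J t) \<Longrightarrow> i \<in> alloc_set (X t) (J t) \<Longrightarrow> X t i < 1"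
    "payment (X t) (J t) \<le> (if allocated (X t) (J t) then 1 else 0)"
    if "t \<in> {1..T}" for t i
    using job_facts[of "l t" "d t" "a t" W "v t" "X t"] valid[OF that] Xpos[of t] unfolding Jt by auto
  have ones: "\<not> allocated (\<lambda>_. 1) (J t)" if "t \<in> {1..T}" for t
    using ones_not_alloc[of "l t" "d t" "a t" "v t"] valid[OF that] unfolding Jt by auto
  have ones_set: "alloc_set (\<lambda>_. 1) (J t) = {}" if "t \<in> {1..T}" for t
    using ones[OF that] unfolding Jt alloc_set_def by simp
  have alloc_pos: "1 \<le> S t i" if "t \<in> {1..T}" "i \<in> al t" for t i
  proof -
    have "allocated (X t) (J t)" using that in_alloc_allocated unfolding al_def by blast
    then have "X t i < 1" using jf(3)[OF that(1)] that(2) unfolding al_def by blast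
    moreover have "i \<in> window W (a t)" using jf(1)[OF that(1)] that(2) unfolding al_def by blast
    ultimately show ?thesis using Xfeas[of t] unfolding feasible_price_def by force
  qed
  have fresh: "\<forall>i. i \<in> window W (a (t0 + k)) \<and> a t0 + W \<le> i \<longrightarrow> S (t0 + k) i \<le> H (t0 + k) i"
    if "t0 + k \<le> t1" for k
    using that
  proof (induction k)
    case 0
    then show ?case by (auto simp: window_def)
  next
    case (Suc k)
    let ?t = "t0 + k"
    have tT: "?t \<in> {1..T}" using Suc.prems t01 t1T by auto
    have IH: "\<And>i. i \<in> window W (a ?t) \<Longrightarrow> a t0 + W \<le> i \<Longrightarrow> S ?t i \<le> H ?t i"
      using Suc.IH Suc.prems by auto
    show ?case
    proof (intro allI impI, elim conjE)
      fix i assume iw: "i \<in> window W (a (t0 + Suc k))" and ib: "a t0 + W \<le> i"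
      have sS: "S (Suc ?t) = trans W c (J ?t) (J (Suc ?t)) (S ?t) (X ?t)" using S_step t01 by simp
      have sH: "H (Suc ?t) = trans W c (J ?t) (J (Suc ?t)) (H ?t) (Y ?t)" using H_step by simp
      show "S (t0 + Suc k) i \<le> H (t0 + Suc k) i"
      proof (cases "i \<in> window W (a ?t)")
        case True
        note ih = IH[OF True ib]
        show ?thesis
        proof (cases "fol ?t")
          case True
          then show ?thesis using sS sH ih iw \<open>i \<in> window W (a ?t)\<close> Yeq[of ?t]
            by (simp add: trans_def fJ)
        next
          case False
          then have "Y ?t = (\<lambda>_. 1)" using Yeq by simp
          then show ?thesis using sS sH ih iw \<open>i \<in> window W (a ?t)\<close> ones_set[OF tT]
            by (simp add: trans_def fJ)
        qed
      next
        case False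
        then show ?thesis using sS sH iw by (simp add: trans_def fJ)
      qed
    qed
  qed
  have amonoT: "a t0 \<le> a t" if "t \<in> {t0..t1}" for t
    using amono[of "t - t0"] that t1T by simp
  have blockR: "window W (a t) \<subseteq> R" if th: "t \<in> {t0..t1}" "\<not> fol t" for t
  proof -
    obtain i where i: "i \<in> window W (a t)" "\<not> S t i \<le> H t i" using th(2) unfolding fol_def by blast
    have "\<not> (a t0 + W \<le> i)" using fresh[of "t - t0"] th(1) i by auto
    then show ?thesis using i(1) amonoT[OF th(1)] unfolding R_def window_def by auto
  qed
  have finR: "finite R" unfolding R_def by simp
  have L_card: "L t \<le> card (R \<inter> al t)" if "t \<in> {t0..t1}" for t
  proof (cases "\<not> fol t \<and> allocated (X t) (J t)")
    case True
    have tT: "t \<in> {1..T}" using that t01 t1T by auto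
    have "alloc_start (X t) (J t) \<in> R \<inter> al t"
      using jf(2)[OF tT] jf(1)[OF tT] True blockR[OF that] unfolding al_def by blast
    then have "R \<inter> al t \<noteq> {}" by blast
    then have "0 < card (R \<inter> al t)" using finR by (simp add: card_gt_0_iff)
    then show ?thesis unfolding L_def by simp
  next
    case False
    then show ?thesis unfolding L_def by auto
  qed
  have L_last: "L t \<le> (\<Sum>i\<in>R. q t i)" if "t \<in> {t0..t1}" for t
  proof (cases "\<not> fol t \<and> allocated (X t) (J t)")
    case True
    have tT: "t \<in> {1..T}" using that t01 t1T by auto
    define k where "k = alloc_start (X t) (J t)"
    have k: "k \<in> R" "k \<in> al t" "k \<in> window W (a t)"
      using jf(2)[OF tT] jf(1)[OF tT] True blockR[OF that] unfolding al_def k_def by blast+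
    have "1 \<le> q t k" using alloc_pos[OF tT k(2)] k(3) unfolding q_def window_def by auto
    also have "q t k \<le> (\<Sum>i\<in>R. q t i)" by (rule member_le_sum) (use k finR in auto)
    finally show ?thesis unfolding L_def using True by simp
  next
    case False
    then show ?thesis unfolding L_def by auto
  qed
  have step_pt: "q (Suc t) i + (if i \<in> al t then 1 else 0) \<le> q t i"
    if "t0 \<le> t" "t < t1" for t i
  proof -
    have tT: "t \<in> {1..T}" using that t01 t1T by auto
    have am: "a t \<le> a (Suc t)" using amono1[of t] that t01 t1T by auto
    have sS: "S (Suc t) = trans W c (J t) (J (Suc t)) (S t) (X t)" using S_step that t01 by simp
    have sub: "al t \<subseteq> window W (a t)" using jf(1)[OF tT] unfolding al_def .
    have Sv: "S (Suc t) i = (if i \<in> window W (a t) \<and> i \<in> window W (a (Suc t))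
        then S t i - (if i \<in> al t then 1 else 0)
        else if i \<in> window W (a (Suc t)) then c i else 0)"
      using sS by (simp add: trans_def fJ al_def)
    have wt: "i \<in> window W (a t) \<longleftrightarrow> a t \<le> i \<and> i < a t + W" by (simp add: window_def)
    have wt': "i \<in> window W (a (Suc t)) \<longleftrightarrow> a (Suc t) \<le> i \<and> i < a (Suc t) + W" by (simp add: window_def)
    show ?thesis
    proof (cases "i \<in> al t")
      case True
      have p: "1 \<le> S t i" using alloc_pos[OF tT True] .
      have w: "i \<in> window W (a t)" using sub True by blast
      have qt: "q t i = S t i" using w wt unfolding q_def by simp
      have qs: "q (Suc t) i = S (Suc t) i" using w wt am unfolding q_def by simp
      show ?thesis
      proof (cases "i \<in> window W (a (Suc t))")
        case True
        then show ?thesis using qt qs Sv w p \<open>i \<in> al t\<close> by simp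
      next
        case False
        then show ?thesis using qt qs Sv w p \<open>i \<in> al t\<close> by simp
      qed
    next
      case False
      show ?thesis
      proof (cases "i < a t + W")
        case True
        have qt: "q t i = S t i" using True unfolding q_def by simp
        have qs: "q (Suc t) i = S (Suc t) i" using True am unfolding q_def by simp
        show ?thesis
        proof (cases "i \<in> window W (a t)")
          case True
          then show ?thesis using qt qs Sv False by simp
        next
          case nw: False
          then have "i < a (Suc t)" using \<open>i < a t + W\<close> wt am by simp
          then have "S (Suc t) i = 0" using Sv nw wt' by simp
          then show ?thesis using qs False by simp
        qed
      next
        case False
        then show ?thesis using \<open>i \<notin> al t\<close> SleC[of "Suc t" i] unfolding q_def by auto
      qed
    qed
  qed
  have step_sum: "(\<Sum>i\<in>R. q (Suc t) i) + card (R \<inter> al t) \<le> (\<Sum>i\<in>R. q t i)"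
    if "t0 \<le> t" "t < t1" for t
  proof -
    have c: "card (R \<inter> al t) = (\<Sum>i\<in>R. if i \<in> al t then 1 else 0)"
      using finR by (simp add: sum.If_cases Int_def)
    have "(\<Sum>i\<in>R. q (Suc t) i) + card (R \<inter> al t) = (\<Sum>i\<in>R. q (Suc t) i + (if i \<in> al t then 1 else 0))"
      unfolding c by (simp add: sum.distrib)
    also have "\<dots> \<le> (\<Sum>i\<in>R. q t i)" by (rule sum_mono) (use step_pt that in auto)
    finally show ?thesis .
  qed
  have tele: "(\<Sum>t\<in>{t1 - m..t1}. L t) \<le> (\<Sum>i\<in>R. q (t1 - m) i)" if "m \<le> t1 - t0" for m
    using that
  proof (induction m)
    case 0
    then show ?case using L_last[of t1] t0t1 by simp
  next
    case (Suc m)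
    let ?t = "t1 - Suc m"
    have tt: "t0 \<le> ?t" "?t < t1" using Suc.prems by auto
    have e: "{?t..t1} = insert ?t {t1 - m..t1}" "Suc ?t = t1 - m" using Suc.prems by auto
    have "(\<Sum>t\<in>{?t..t1}. L t) = L ?t + (\<Sum>t\<in>{t1 - m..t1}. L t)" unfolding e(1) using Suc.prems by simp
    also have "\<dots> \<le> card (R \<inter> al ?t) + (\<Sum>i\<in>R. q (t1 - m) i)"
      using L_card[of ?t] Suc.IH Suc.prems by (intro add_mono) auto
    also have "\<dots> \<le> (\<Sum>i\<in>R. q ?t i)" using step_sum[OF tt] e(2) by (simp add: add.commute)
    finally show ?case .
  qed
  have Lsum: "(\<Sum>t\<in>{t0..t1}. L t) \<le> 2 * W * C"
  proof -
    have "(\<Sum>t\<in>{t0..t1}. L t) \<le> (\<Sum>i\<in>R. q t0 i)" using tele[of "t1 - t0"] t0t1 by simp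
    also have "\<dots> \<le> (\<Sum>i\<in>R. C)" by (rule sum_mono) (auto simp: q_def cC intro: le_trans[OF SleC cC])
    also have "\<dots> = 2 * W * C" unfolding R_def by simp
    finally show ?thesis .
  qed
  have chs: "chaser_state W c (orc W c) \<gamma> t0 s0 J (t - t0) = H t" for t
    unfolding H_def by (rule chaser_eq[OF t01])
  have cha: "chaser_action (orc W c) \<gamma> t0 s0 J t = Y t" if "t \<in> {t0..t1}" for t
    unfolding Y_def H_def using action_eq[OF t01] that by simp
  have tgt: "\<gamma> (a t) (policy_state W c \<gamma> J (t - 1)) = X t" for t unfolding X_def S_def ..
  have feas: "\<forall>t\<in>{t0..t1}. feasible_price W (a t) (H t) (Y t)"
  proof
    fix t assume t: "t \<in> {t0..t1}"
    show "feasible_price W (a t) (H t) (Y t)"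
    proof (cases "fol t")
      case True
      then show ?thesis using Xfeas[of t] Yeq[of t] unfolding feasible_price_def fol_def by force
    next
      case False
      then show ?thesis using Yeq[of t] unfolding feasible_price_def by simp
    qed
  qed
  have perround: "payment (X t) (J t) - payment (Y t) (J t) \<le> real (L t)" if "t \<in> {t0..t1}" for t
  proof -
    have tT: "t \<in> {1..T}" using that t01 t1T by auto
    show ?thesis
    proof (cases "fol t")
      case True
      then show ?thesis using Yeq[of t] by simp
    next
      case False
      have "payment (Y t) (J t) = 0" using False Yeq[of t] ones[OF tT] by (simp add: payment_def)
      then show ?thesis using jf(4)[OF tT] False unfolding L_def by (auto split: if_splits)
    qed
  qed
  have "(\<Sum>t\<in>{t0..t1}. payment (X t) (J t)) - (\<Sum>t\<in>{t0..t1}. payment (Y t) (J t))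
        = (\<Sum>t\<in>{t0..t1}. payment (X t) (J t) - payment (Y t) (J t))"
    by (simp add: sum_subtractf)
  also have "\<dots> \<le> (\<Sum>t\<in>{t0..t1}. real (L t))" by (rule sum_mono) (use perround in auto)
  also have "\<dots> = real (\<Sum>t\<in>{t0..t1}. L t)" by simp
  also have "\<dots> \<le> real (2 * W * C)" using Lsum by linarith
  also have "\<dots> = 2 * real C * real W" by simp
  finally have reg: "(\<Sum>t\<in>{t0..t1}. payment (X t) (J t)) - (\<Sum>t\<in>{t0..t1}. payment (Y t) (J t))
        \<le> 2 * real C * real W" .
  have s2: "(\<Sum>t\<in>{t0..t1}. payment (chaser_action (orc W c) \<gamma> t0 s0 J t) (J t))
      = (\<Sum>t\<in>{t0..t1}. payment (Y t) (J t))" by (rule sum.cong) (simp_all add: cha)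
  show "(\<forall>t\<in>{t0..t1}.
         feasible_price W (a t) (chaser_state W c (orc W c) \<gamma> t0 s0 (job_of a d l v) (t - t0))
           (chaser_action (orc W c) \<gamma> t0 s0 (job_of a d l v) t)) \<and>
      (\<Sum>t\<in>{t0..t1}. payment (\<gamma> (a t) (policy_state W c \<gamma> (job_of a d l v) (t - 1))) (job_of a d l v t))
      - (\<Sum>t\<in>{t0..t1}. payment (chaser_action (orc W c) \<gamma> t0 s0 (job_of a d l v) t) (job_of a d l v t))
      \<le> 2 * real C * real W"
    unfolding J_def[symmetric] tgt s2 chs using feas cha reg by simp
qed

end
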